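(* For each voter, the sincere strategy is dominant (and it is the unique dominant strategy).
   Context: Let $\mathcal{X}$ be a finite set of alternatives. A proto-ranking is an irreflexive transitive relation on $\mathcal{X}$; a ranking is a total proto-ranking. There are $I$ voters ($I$ odd), each voter $i$ having a preference $\succ_i$ (a ranking on $\mathcal{X}$), and a chair. Interaction: start from $R_0=\varnothing$; in each period $t\geq1$ with $R_{t-1}$ not total, the chair offers a pair $\{x,y\}$ of distinct alternatives unranked by $R_{t-1}$; each voter votes for $x$ or $y$; the alternative with more votes wins, and $R_t$ is the transitive closure of $R_{t-1}\cup\{(\text{winner},\text{loser})\}$; stop when $R_t$ is total. A history is the sequence of offered pairs together with which alternative won each (not individual votes). A strategy of the chair assigns to each non-terminal history a pair unranked at it. A strategy $\sigma_i$ of voter $i$ specifies, for each non-terminal history and each pair offered after it, which of the two alternatives to vote for. The sincere strategy of voter $i$ always votes for the $\succ_i$-better alternative of the offered pair. For strategies $\sigma,\sigma_1,\dots,\sigma_I$, $R(\sigma,\sigma_1,\dots,\sigma_I)$ denotes the resulting final ranking. A ranking $R$ is more aligned with $\succ_i$ than $R'$ if for all $x\succ_i y$, $xR'y$ implies $xRy$. Strategy $\sigma_i'$ of voter $i$ is obviously better than $\sigma_i$ against $\sigma,\sigma_{-i}$ (strategies of the chair and other voters) if $R(\sigma,\sigma_i',\sigma_{-i})$ is distinct from, and more aligned with $\succ_i$ than, $R(\sigma,\sigma_i,\sigma_{-i})$. A strategy $\sigma_i$ is dominant if for every other strategy $\sigma_i'$ of voter $i$: (i) there are no strategies $\sigma,\sigma_{-i}$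 against which $\sigma_i'$ is obviously better than $\sigma_i$, and (ii) there exist strategies $\sigma,\sigma_{-i}$ against which $\sigma_i$ is obviously better than $\sigma_i'$. *)

theory Defs
  imports Main
begin

text \<open>A relation is ('a \<times> 'a) set,
  (x,y) \<in> R meaning "x is ranked above y".\<close>

definition ranking :: "('a \<times> 'a) set \<Rightarrow> bool" where
  "ranking R \<longleftrightarrow> irrefl R \<and> trans R \<and> total R"

definition unranked :: "('a \<times> 'a) set \<Rightarrow> 'a \<Rightarrow> 'a \<Rightarrow> bool" where
  "unranked R x y \<longleftrightarrow> x \<noteq> y \<and> (x, y) \<notin> R \<and> (y, x) \<notin> R"

text \<open>A history: chronological list of periods; each period is recorded as
  (winner, loser), which encodes the offered pair {winner, loser} and its winner.\<close>
type_synonym 'a history = "('a \<times> 'a) list"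

definition hist_rel :: "'a history \<Rightarrow> ('a \<times> 'a) set" where
  "hist_rel h = foldl (\<lambda>R wl. trancl (R \<union> {wl})) {} h"

inductive valid_hist :: "'a history \<Rightarrow> bool" where
  Nil: "valid_hist []"
| snoc: "valid_hist h \<Longrightarrow> \<not> total (hist_rel h) \<Longrightarrow> unranked (hist_rel h) w l
         \<Longrightarrow> valid_hist (h @ [(w, l)])"

definition non_terminal :: "'a history \<Rightarrow> bool" where
  "non_terminal h \<longleftrightarrow> valid_hist h \<and> \<not> total (hist_rel h)"

definition offerable :: "'a history \<Rightarrow> 'a set \<Rightarrow> bool" where
  "offerable h P \<longleftrightarrow> (\<exists>x y. P = {x, y} \<and> unranked (hist_rel h) x y)"

type_synonym 'a chair_strategy = "'a history \<Rightarrow> 'a set"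
type_synonym 'a voter_strategy = "'a history \<Rightarrow> 'a set \<Rightarrow> 'a"

definition chair_strat :: "'a chair_strategy \<Rightarrow> bool" where
  "chair_strat c \<longleftrightarrow> (\<forall>h. non_terminal h \<longrightarrow> offerable h (c h))"

definition voter_strat :: "'a voter_strategy \<Rightarrow> bool" where
  "voter_strat s \<longleftrightarrow> (\<forall>h P. non_terminal h \<and> offerable h P \<longrightarrow> s h P \<in> P)"

definition same_strat :: "'a voter_strategy \<Rightarrow> 'a voter_strategy \<Rightarrow> bool" where
  "same_strat s t \<longleftrightarrow> (\<forall>h P. non_terminal h \<and> offerable h P \<longrightarrow> s h P = t h P)"

definition sincere :: "('a \<times> 'a) set \<Rightarrow> 'a voter_strategy" where
  "sincere pref h P = (THE x. x \<in> P \<and> (\<forall>y\<in>P. y \<noteq> x \<longrightarrow> (x, y) \<in> pref))"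

text \<open>Voters are 0..<I.  The winner of pair P is the alternative with a strict majority.\<close>
definition winner :: "nat \<Rightarrow> (nat \<Rightarrow> 'a) \<Rightarrow> 'a set \<Rightarrow> 'a" where
  "winner I votes P = (SOME w. w \<in> P \<and> I < 2 * card {j. j < I \<and> votes j = w})"

definition step :: "nat \<Rightarrow> 'a chair_strategy \<Rightarrow> (nat \<Rightarrow> 'a voter_strategy) \<Rightarrow> 'a history
                    \<Rightarrow> 'a \<times> 'a" where
  "step I c vs h = (let P = c h; w = winner I (\<lambda>j. vs j h P) P in (w, SOME l. l \<in> P \<and> l \<noteq> w))"

fun play :: "nat \<Rightarrow> 'a chair_strategy \<Rightarrow> (nat \<Rightarrow> 'a voter_strategy) \<Rightarrow> nat \<Rightarrow> 'a history" where
  "play I c vs 0 = []"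
| "play I c vs (Suc n) = (let h = play I c vs n in
      if total (hist_rel h) then h else h @ [step I c vs h])"

text \<open>Every period ranks a previously unranked pair, so the
  interaction stops after at most card(UNIV)*card(UNIV) periods; playing that many
  (idle once terminal) periods yields the final ranking.\<close>
definition outcome :: "nat \<Rightarrow> ('a::finite) chair_strategy \<Rightarrow> (nat \<Rightarrow> 'a voter_strategy)
                       \<Rightarrow> ('a \<times> 'a) set" where
  "outcome I c vs = hist_rel (play I c vs (card (UNIV :: 'a set) * card (UNIV :: 'a set)))"

definition more_aligned :: "('a \<times> 'a) set \<Rightarrow> ('a \<times> 'a) set \<Rightarrow> ('a \<times> 'a) set \<Rightarrow> bool" where
  "more_aligned pref R R' \<longleftrightarrow> (\<forall>x y. (x, y) \<in> pref \<longrightarrow> (x, y) \<in> R' \<longrightarrow> (x, y) \<in> R)"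

definition obviously_better ::
  "nat \<Rightarrow> (nat \<Rightarrow> ('a::finite \<times> 'a) set) \<Rightarrow> nat \<Rightarrow> 'a chair_strategy
   \<Rightarrow> (nat \<Rightarrow> 'a voter_strategy) \<Rightarrow> 'a voter_strategy \<Rightarrow> 'a voter_strategy \<Rightarrow> bool" where
  "obviously_better I pref i c vs s' s \<longleftrightarrow>
     (let R' = outcome I c (vs(i := s')); R = outcome I c (vs(i := s))
      in R' \<noteq> R \<and> more_aligned (pref i) R' R)"

definition opponents_ok :: "nat \<Rightarrow> nat \<Rightarrow> 'a chair_strategy \<Rightarrow> (nat \<Rightarrow> 'a voter_strategy) \<Rightarrow> bool" where
  "opponents_ok I i c vs \<longleftrightarrow> chair_strat c \<and> (\<forall>j<I. j \<noteq> i \<longrightarrow> voter_strat (vs j))"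

definition dominant ::
  "nat \<Rightarrow> (nat \<Rightarrow> ('a::finite \<times> 'a) set) \<Rightarrow> nat \<Rightarrow> 'a voter_strategy \<Rightarrow> bool" where
  "dominant I pref i s \<longleftrightarrow> voter_strat s \<and>
     (\<forall>s'. voter_strat s' \<and> \<not> same_strat s' s \<longrightarrow>
        (\<not> (\<exists>c vs. opponents_ok I i c vs \<and> obviously_better I pref i c vs s' s)) \<and>
        (\<exists>c vs. opponents_ok I i c vs \<and> obviously_better I pref i c vs s s'))"

end

theory Submission
  imports Defs
begin

lemma hist_rel_Nil[simp]: "hist_rel [] = {}" by (simp add: hist_rel_def)
lemma hist_rel_snoc[simp]: "hist_rel (h @ [p]) = trancl (hist_rel h \<union> {p})"
  by (simp add: hist_rel_def)

lemma hist_rel_mono_append: "hist_rel h \<subseteq> hist_rel (h @ g)"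
proof (induction g rule: rev_induct)
  case Nil then show ?case by simp
next
  case (snoc p g)
  have "hist_rel (h @ g) \<subseteq> hist_rel (h @ g @ [p])"
    proof -
    have "hist_rel (h @ g @ [p]) = trancl (hist_rel (h @ g) \<union> {p})"
      by (metis append_assoc hist_rel_snoc)
    then show ?thesis by (auto intro: r_into_trancl')
  qed
  then show ?case using snoc by auto
qed

lemma set_hist_rel: "set h \<subseteq> hist_rel h"
proof (induction h rule: rev_induct)
  case Nil then show ?case by simp
next
  case (snoc p h)
  then show ?case by (auto intro: r_into_trancl')
qed

lemma spo_add:
  assumes "irrefl R" "trans R" "unranked R w l"
  shows "irrefl (trancl (R \<union> {(w,l)}))" "trans (trancl (R \<union> {(w,l)}))"
proof -
  have eq: "trancl (R \<union> {(w,l)}) = R \<union> {(a, b). (a, w) \<in> R\<^sup>* \<and> (l, b) \<in> R\<^sup>*}"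
    using trancl_insert[of w l R] assms(2) by (simp add: trancl_id)
  have rt: "R\<^sup>* = R \<union> Id" using assms(2) by (metis rtrancl_trancl_reflcl trancl_id)
  show "irrefl (trancl (R \<union> {(w,l)}))"
    unfolding eq irrefl_def
  proof (intro allI notI)
    fix a assume "(a, a) \<in> R \<union> {(a, b). (a, w) \<in> R\<^sup>* \<and> (l, b) \<in> R\<^sup>*}"
    then show False using assms unfolding rt irrefl_def unranked_def trans_def by blast
  qed
  show "trans (trancl (R \<union> {(w,l)}))" by simp
qed

lemma valid_props:
  "valid_hist (h :: ('a::finite \<times> 'a) list) \<Longrightarrow> irrefl (hist_rel h) \<and> trans (hist_rel h) \<and> length h \<le> card (hist_rel h)"
proof (induction rule: valid_hist.induct)
  case Nil then show ?case by (simp add: irrefl_def trans_def)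
next
  case (snoc h w l)
  let ?R = "hist_rel h"
  have "?R \<subset> trancl (?R \<union> {(w,l)})"
    using snoc(3) unfolding unranked_def by auto
  then have "card ?R < card (trancl (?R \<union> {(w,l)}))"
    by (simp add: psubset_card_mono)
  then show ?case using snoc spo_add[of ?R w l] by simp
qed

lemma valid_prefix:
  "valid_hist h \<Longrightarrow> k < length h \<Longrightarrow> unranked (hist_rel (take k h)) (fst (h!k)) (snd (h!k))
     \<and> \<not> total (hist_rel (take k h)) \<and> valid_hist (take k h)"
proof (induction arbitrary: k rule: valid_hist.induct)
  case Nil then show ?case by simp
next
  case (snoc h w l)
  show ?case
  proof (cases "k < length h")
    case True then show ?thesis using snoc by (simp add: nth_append)
  next
    case False then have "k = length h" using snoc by simp
    then show ?thesis using snoc by simp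
  qed
qed


lemma rank_asym: "ranking G \<Longrightarrow> (a,b) \<in> G \<Longrightarrow> (b,a) \<notin> G"
  unfolding ranking_def irrefl_def trans_def by blast

lemma sincere_pick: "ranking G \<Longrightarrow> (a,b) \<in> G \<Longrightarrow> sincere G h {a,b} = a"
  unfolding sincere_def
proof (rule the_equality)
  assume "ranking G" "(a,b) \<in> G"
  then show "a \<in> {a, b} \<and> (\<forall>y\<in>{a, b}. y \<noteq> a \<longrightarrow> (a, y) \<in> G)" by auto
next
  fix x assume r: "ranking G" "(a,b) \<in> G" and x: "x \<in> {a, b} \<and> (\<forall>y\<in>{a, b}. y \<noteq> x \<longrightarrow> (x, y) \<in> G)"
  then show "x = a" using rank_asym[OF r] by auto
qed

lemma sincere_in: "ranking G \<Longrightarrow> a \<noteq> b \<Longrightarrow> sincere G h {a,b} \<in> {a,b}"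
proof -
  assume r: "ranking G" and ab: "a \<noteq> b"
  then have "(a,b) \<in> G \<or> (b,a) \<in> G" unfolding ranking_def total_on_def by auto
  then show ?thesis
  proof
    assume "(a,b) \<in> G" then show ?thesis using sincere_pick[OF r] by simp
  next
    assume "(b,a) \<in> G" then have "sincere G h {b,a} = b" using sincere_pick[OF r] by simp
    then show ?thesis by (simp add: insert_commute)
  qed
qed

lemma winner_char:
  assumes "odd I" "a \<noteq> b" "\<forall>j<I. votes j \<in> {a,b}"
  shows "winner I votes {a,b} \<in> {a,b}"
    and "winner I votes {a,b} = a \<longleftrightarrow> I < 2 * card {j. j < I \<and> votes j = a}"
proof -
  let ?A = "{j. j < I \<and> votes j = a}" and ?B = "{j. j < I \<and> votes j = b}"
  have un: "?A \<union> ?B = {..<I}" using assms(3) by auto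
  have "card (?A \<union> ?B) = card ?A + card ?B"
    by (rule card_Un_disjoint) (use assms(2) in auto)
  then have cs: "card ?A + card ?B = I" using un by simp
  have maj: "(I < 2 * card ?A) \<noteq> (I < 2 * card ?B)" using cs assms(1) by presburger
  have ex: "\<exists>w. w \<in> {a,b} \<and> I < 2 * card {j. j < I \<and> votes j = w}" using maj by blast
  have w: "winner I votes {a,b} \<in> {a,b} \<and> I < 2 * card {j. j < I \<and> votes j = winner I votes {a,b}}"
    unfolding winner_def by (rule someI_ex[OF ex])
  then show "winner I votes {a,b} \<in> {a,b}" by simp
  show "winner I votes {a,b} = a \<longleftrightarrow> I < 2 * card {j. j < I \<and> votes j = a}"
    using w maj assms(2) by auto
qed

lemma step_char:
  assumes "c h = {a,b}" "a \<noteq> b" "winner I (\<lambda>j. vs j h (c h)) (c h) = a"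
  shows "step I c vs h = (a,b)"
proof -
  have "(SOME l. l \<in> {a,b} \<and> l \<noteq> a) = b" using assms(2) by (rule_tac some_equality) auto
  then show ?thesis using assms unfolding step_def Let_def by simp
qed

definition prof_ok :: "nat \<Rightarrow> 'a chair_strategy \<Rightarrow> (nat \<Rightarrow> 'a voter_strategy) \<Rightarrow> bool" where
  "prof_ok I c vs \<longleftrightarrow> chair_strat c \<and> (\<forall>j<I. voter_strat (vs j))"

lemma step_unranked:
  assumes "prof_ok I c vs" "odd I" "non_terminal h"
  shows "unranked (hist_rel h) (fst (step I c vs h)) (snd (step I c vs h))"
proof -
  obtain a b where ab: "c h = {a,b}" "unranked (hist_rel h) a b"
    using assms unfolding prof_ok_def chair_strat_def offerable_def by blast
  have off: "offerable h (c h)" using assms unfolding prof_ok_def chair_strat_def by blast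
  have votes: "\<forall>j<I. vs j h (c h) \<in> {a,b}"
    using assms(1,3) off ab(1) unfolding prof_ok_def voter_strat_def by metis
  have neq: "a \<noteq> b" using ab unfolding unranked_def by simp
  have win: "winner I (\<lambda>j. vs j h (c h)) (c h) \<in> {a,b}"
    using winner_char(1)[OF assms(2) neq, of "\<lambda>j. vs j h (c h)"] votes ab(1) by simp
  show ?thesis
  proof (cases "winner I (\<lambda>j. vs j h (c h)) (c h) = a")
    case True
    then have "step I c vs h = (a,b)" using step_char[of c h a b] ab(1) neq by simp
    then show ?thesis using ab by simp
  next
    case False
    then have "winner I (\<lambda>j. vs j h (c h)) (c h) = b" using win by auto
    then have "step I c vs h = (b,a)" using step_char[of c h b a] ab(1) neq by (simp add: insert_commute)
    then show ?thesis using ab unfolding unranked_def by auto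
  qed
qed

lemma play_valid:
  assumes "prof_ok I c vs" "odd I"
  shows "valid_hist (play I c vs n)"
proof (induction n)
  case 0 then show ?case by (simp add: valid_hist.Nil)
next
  case (Suc n)
  let ?h = "play I c vs n"
  show ?case
  proof (cases "total (hist_rel ?h)")
    case True then show ?thesis using Suc by simp
  next
    case False
    then have nt: "non_terminal ?h" using Suc by (simp add: non_terminal_def)
    have "unranked (hist_rel ?h) (fst (step I c vs ?h)) (snd (step I c vs ?h))"
      by (rule step_unranked[OF assms nt])
    then have "valid_hist (?h @ [(fst (step I c vs ?h), snd (step I c vs ?h))])"
      using valid_hist.snoc[OF Suc False] by blast
    then show ?thesis using False by (simp add: Let_def)
  qed
qed

lemma play_mono1:
  "hist_rel (play I c vs n) \<subseteq> hist_rel (play I c vs (Suc n)) \<and> length (play I c vs n) \<le> length (play I c vs (Suc n))"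
  using hist_rel_mono_append[of "play I c vs n"] by (auto simp: Let_def)

lemma play_mono:
  "m \<le> n \<Longrightarrow> hist_rel (play I c vs m) \<subseteq> hist_rel (play I c vs n) \<and> length (play I c vs m) \<le> length (play I c vs n)"
proof (induction n rule: dec_induct)
  case base then show ?case by simp
next
  case (step n) then show ?case using play_mono1[of I c vs n] by auto
qed

lemma play_len: "\<not> total (hist_rel (play I c vs n)) \<Longrightarrow> length (play I c vs n) = n"
proof (induction n)
  case 0 then show ?case by simp
next
  case (Suc n)
  then have "\<not> total (hist_rel (play I c vs n))" by (auto simp: Let_def split: if_splits)
  then show ?case using Suc by (simp add: Let_def)
qed

lemma valid_len_lt:
  assumes "valid_hist (h :: ('a::finite \<times> 'a) list)"
  shows "length h < card (UNIV :: 'a set) * card (UNIV :: 'a set)"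
proof -
  have vp: "irrefl (hist_rel h)" "length h \<le> card (hist_rel h)" using valid_props[OF assms] by auto
  obtain a :: 'a where True by blast
  have "hist_rel h \<subset> UNIV" using vp(1) unfolding irrefl_def by auto
  then have "card (hist_rel h) < card (UNIV :: ('a \<times> 'a) set)" by (simp add: psubset_card_mono)
  also have "card (UNIV :: ('a \<times> 'a) set) = card (UNIV :: 'a set) * card (UNIV :: 'a set)"
    by (metis UNIV_Times_UNIV card_cartesian_product)
  finally show ?thesis using vp(2) by simp
qed

lemma outcome_ranking:
  assumes "prof_ok I c vs" "odd I"
  shows "ranking (outcome I c (vs :: nat \<Rightarrow> ('a::finite) voter_strategy))"
proof -
  let ?N = "card (UNIV :: 'a set) * card (UNIV :: 'a set)"
  have v: "valid_hist (play I c vs ?N)" by (rule play_valid[OF assms])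
  have tot: "total (hist_rel (play I c vs ?N))"
  proof (rule ccontr)
    assume "\<not> total (hist_rel (play I c vs ?N))"
    then have "length (play I c vs ?N) = ?N" by (rule play_len)
    then show False using valid_len_lt[OF v] by simp
  qed
  show ?thesis using valid_props[OF v] tot unfolding ranking_def outcome_def by simp
qed


lemma sincere_vs: "ranking G \<Longrightarrow> voter_strat (sincere G)"
  unfolding voter_strat_def offerable_def unranked_def using sincere_in by fastforce

lemma steps_differ:
  assumes "odd I" "ranking (pref i)" "i < I"
    and "c H = {a,b}" "unranked R a b"
    and votes1: "\<forall>j<I. vsA j H (c H) \<in> {a,b}" and votes2: "\<forall>j<I. vsB j H (c H) \<in> {a,b}"
    and same: "\<forall>j<I. j \<noteq> i \<longrightarrow> vsA j H (c H) = vsB j H (c H)"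
    and si: "vsA i H (c H) = sincere (pref i) H (c H)"
    and diff: "step I c vsA H \<noteq> step I c vsB H"
  shows "\<exists>x y. (x,y) \<in> pref i \<and> step I c vsA H = (x,y) \<and> step I c vsB H = (y,x)"
proof -
  have ab: "a \<noteq> b" using assms(5) unfolding unranked_def by simp
  obtain x y where xy: "{a,b} = {x,y}" "x \<noteq> y" "(x,y) \<in> pref i"
    using assms(2) ab unfolding ranking_def total_on_def by (metis insert_commute UNIV_I)
  have cxy: "c H = {x,y}" using xy assms(4) by simp
  have sx: "vsA i H (c H) = x" using si cxy sincere_pick[OF assms(2) xy(3)] by simp
  let ?v1 = "\<lambda>j. vsA j H (c H)" and ?v2 = "\<lambda>j. vsB j H (c H)"
  have v1: "\<forall>j<I. ?v1 j \<in> {x,y}" and v2: "\<forall>j<I. ?v2 j \<in> {x,y}" using votes1 votes2 xy by auto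
  have v1': "\<forall>j<I. ?v1 j \<in> {y,x}" and v2': "\<forall>j<I. ?v2 j \<in> {y,x}" using v1 v2 by auto
  define w1 where "w1 = winner I ?v1 (c H)"
  define w2 where "w2 = winner I ?v2 (c H)"
  have w1in: "w1 \<in> {x,y}" using winner_char(1)[OF assms(1) xy(2) v1] cxy w1_def by simp
  have w2in: "w2 \<in> {x,y}" using winner_char(1)[OF assms(1) xy(2) v2] cxy w2_def by simp
  have "w1 \<noteq> w2"
  proof
    assume "w1 = w2"
    then show False using diff unfolding step_def Let_def w1_def w2_def by simp
  qed
  have "w1 \<noteq> y"
  proof
    assume "w1 = y"
    then have "I < 2 * card {j. j < I \<and> ?v1 j = y}"
      using winner_char(2)[OF assms(1) xy(2)[symmetric] v1'] cxy w1_def by (simp add: insert_commute)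
    moreover have "{j. j < I \<and> ?v1 j = y} \<subseteq> {j. j < I \<and> ?v2 j = y}"
      using same sx xy(2) by auto
    then have "card {j. j < I \<and> ?v1 j = y} \<le> card {j. j < I \<and> ?v2 j = y}"
      by (rule card_mono[rotated]) simp
    ultimately have "I < 2 * card {j. j < I \<and> ?v2 j = y}" by linarith
    then have "w2 = y"
      using winner_char(2)[OF assms(1) xy(2)[symmetric] v2'] cxy w2_def by (simp add: insert_commute)
    then show False using \<open>w1 = y\<close> \<open>w1 \<noteq> w2\<close> by simp
  qed
  then have "w1 = x" "w2 = y" using w1in w2in \<open>w1 \<noteq> w2\<close> by auto
  then have "step I c vsA H = (x,y)" "step I c vsB H = (y,x)"
    using step_char[of c H x y I vsA] step_char[of c H y x I vsB] cxy xy(2) w1_def w2_def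
    by (auto simp: insert_commute)
  then show ?thesis using xy(3) by blast
qed

lemma part_i:
  fixes c :: "('a::finite) chair_strategy"
  assumes "odd I" "ranking (pref i)" "i < I" "voter_strat s'" "opponents_ok I i c vs"
  shows "\<not> obviously_better I pref i c vs s' (sincere (pref i))"
proof
  assume ob: "obviously_better I pref i c vs s' (sincere (pref i))"
  define vs1 where "vs1 = vs(i := sincere (pref i))"
  define vs2 where "vs2 = vs(i := s')"
  have ok1: "prof_ok I c vs1" and ok2: "prof_ok I c vs2"
    using assms sincere_vs[OF assms(2)] unfolding prof_ok_def opponents_ok_def vs1_def vs2_def by auto
  let ?N = "card (UNIV :: 'a set) * card (UNIV :: 'a set)"
  let ?p1 = "play I c vs1" and ?p2 = "play I c vs2"
  have neqo: "outcome I c vs2 \<noteq> outcome I c vs1" and ma: "more_aligned (pref i) (outcome I c vs2) (outcome I c vs1)"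
    using ob unfolding obviously_better_def vs1_def vs2_def Let_def by auto
  have ex: "\<exists>n. ?p1 n \<noteq> ?p2 n" using neqo unfolding outcome_def by metis
  define n where "n = (LEAST n. ?p1 n \<noteq> ?p2 n)"
  have pn: "?p1 n \<noteq> ?p2 n" using LeastI_ex[OF ex] n_def by simp
  have nN: "n \<le> ?N"
  proof -
    have "?p1 ?N \<noteq> ?p2 ?N" using neqo unfolding outcome_def by metis
    then show ?thesis unfolding n_def by (rule Least_le)
  qed
  have "n \<noteq> 0" using pn by (metis play.simps(1))
  then obtain k where k: "n = Suc k" by (cases n) auto
  have eqk: "?p1 k = ?p2 k" using not_less_Least[of k "\<lambda>n. ?p1 n \<noteq> ?p2 n"] k n_def by auto
  define H where "H = ?p1 k"
  have nt: "\<not> total (hist_rel H)" using pn eqk k H_def by (auto simp: Let_def)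
  have s1: "?p1 (Suc k) = H @ [step I c vs1 H]" using nt H_def by (simp add: Let_def)
  have s2: "?p2 (Suc k) = H @ [step I c vs2 H]" using nt H_def eqk by (simp add: Let_def)
  have dstep: "step I c vs1 H \<noteq> step I c vs2 H" using pn k s1 s2 by auto
  have ntH: "non_terminal H" using play_valid[OF ok1 assms(1)] nt H_def unfolding non_terminal_def by simp
  have off: "offerable H (c H)" using ok1 ntH unfolding prof_ok_def chair_strat_def by blast
  then obtain a b where ab: "c H = {a,b}" "unranked (hist_rel H) a b" unfolding offerable_def by blast
  have votes1: "\<forall>j<I. vs1 j H (c H) \<in> {a,b}" and votes2: "\<forall>j<I. vs2 j H (c H) \<in> {a,b}"
    using ok1 ok2 ntH off ab(1) unfolding prof_ok_def voter_strat_def by metis+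
  have same: "\<forall>j<I. j \<noteq> i \<longrightarrow> vs1 j H (c H) = vs2 j H (c H)" unfolding vs1_def vs2_def by simp
  have si: "vs1 i H (c H) = sincere (pref i) H (c H)" unfolding vs1_def by simp
  obtain x y where xy: "(x,y) \<in> pref i" "step I c vs1 H = (x,y)" "step I c vs2 H = (y,x)"
    using steps_differ[where c=c and H=H and vsA=vs1 and vsB=vs2 and pref=pref and I=I and i=i, OF assms(1,2,3) ab votes1 votes2 same si dstep] by blast
  have "(x,y) \<in> hist_rel (?p1 (Suc k))" using s1 xy(2) by (auto intro: r_into_trancl')
  then have in1: "(x,y) \<in> outcome I c vs1" using play_mono[of "Suc k" ?N I c vs1] nN k
    unfolding outcome_def by auto
  have "(y,x) \<in> hist_rel (?p2 (Suc k))" using s2 xy(3) by (auto intro: r_into_trancl')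
  then have in2: "(y,x) \<in> outcome I c vs2" using play_mono[of "Suc k" ?N I c vs2] nN k
    unfolding outcome_def by auto
  have "(x,y) \<notin> outcome I c vs2" using rank_asym[OF outcome_ranking[OF ok2 assms(1)] in2] .
  then show False using ma in1 xy(1) unfolding more_aligned_def by blast
qed


lemma lin_ext:
  fixes S :: "('a::finite \<times> 'a) set"
  assumes "irrefl S" "trans S"
  shows "\<exists>L. ranking L \<and> S \<subseteq> L"
  using assms
proof (induction "card (UNIV - S)" arbitrary: S rule: less_induct)
  case less
  show ?case
  proof (cases "total S")
    case True then show ?thesis using less.prems unfolding ranking_def by blast
  next
    case False
    then obtain a b where ab: "unranked S a b" unfolding total_on_def unranked_def by blast
    let ?S' = "trancl (S \<union> {(a,b)})"
    have sp: "irrefl ?S'" "trans ?S'" using spo_add[OF less.prems ab] by auto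
    have sub: "S \<subseteq> ?S'" by (auto intro: r_into_trancl')
    have "(a,b) \<in> ?S'" by (auto intro: r_into_trancl')
    then have "UNIV - ?S' \<subset> UNIV - S" using sub ab unfolding unranked_def by auto
    then have "card (UNIV - ?S') < card (UNIV - S)" by (simp add: psubset_card_mono)
    then obtain L where "ranking L" "?S' \<subseteq> L" using less(1)[OF _ sp] by blast
    then show ?thesis using sub by blast
  qed
qed

definition blk :: "('a \<times> 'a) set \<Rightarrow> 'a \<Rightarrow> 'a \<Rightarrow> 'a \<Rightarrow> nat" where
  "blk S u v z = (if z = u then 1 else if z = v then 2 else if (u,z) \<in> S \<or> (v,z) \<in> S then 3 else 0)"

definition bord :: "('a \<Rightarrow> nat) \<Rightarrow> ('a \<times> 'a) set \<Rightarrow> ('a \<times> 'a) set" where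
  "bord \<beta> L = {(a,b). \<beta> a < \<beta> b \<or> (\<beta> a = \<beta> b \<and> (a,b) \<in> L)}"

lemma bord_ranking: "ranking L \<Longrightarrow> ranking (bord \<beta> L)"
proof -
  assume r: "ranking L"
  have i: "irrefl (bord \<beta> L)" using r unfolding ranking_def bord_def irrefl_def by auto
  have t: "trans (bord \<beta> L)"
  proof (rule transI)
    fix a b c assume ab: "(a,b) \<in> bord \<beta> L" and bc: "(b,c) \<in> bord \<beta> L"
    show "(a,c) \<in> bord \<beta> L"
    proof (cases "\<beta> a = \<beta> b \<and> \<beta> b = \<beta> c")
      case True
      then have "(a,b) \<in> L" "(b,c) \<in> L" using ab bc unfolding bord_def by auto
      then have "(a,c) \<in> L" using r unfolding ranking_def trans_def by blast
      then show ?thesis using True unfolding bord_def by simp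
    next
      case False
      have "\<beta> a \<le> \<beta> b" "\<beta> b \<le> \<beta> c" using ab bc unfolding bord_def by auto
      then have "\<beta> a < \<beta> c" using False by linarith
      then show ?thesis unfolding bord_def by simp
    qed
  qed
  have to: "total (bord \<beta> L)"
    unfolding total_on_def
  proof (intro ballI impI)
    fix a b :: 'a assume "a \<noteq> b"
    then have "(a,b) \<in> L \<or> (b,a) \<in> L" using r unfolding ranking_def total_on_def by blast
    then show "(a,b) \<in> bord \<beta> L \<or> (b,a) \<in> bord \<beta> L" unfolding bord_def
      by (cases "\<beta> a < \<beta> b"; cases "\<beta> b < \<beta> a") auto
  qed
  show ?thesis using i t to unfolding ranking_def by simp
qed

lemma bord_sup:
  assumes "irrefl S" "trans S" "unranked S u v" "S \<subseteq> L"
  shows "S \<subseteq> bord (blk S u v) L"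
proof
  fix p assume p: "p \<in> S"
  obtain a b where pab: "p = (a,b)" by (cases p)
  have ab: "(a,b) \<in> S" using p pab by simp
  have ir: "\<And>z. (z,z) \<notin> S" using assms(1) unfolding irrefl_def by blast
  have tr: "\<And>p q r. (p,q) \<in> S \<Longrightarrow> (q,r) \<in> S \<Longrightarrow> (p,r) \<in> S" using assms(2) unfolding trans_def by blast
  have un: "u \<noteq> v" "(u,v) \<notin> S" "(v,u) \<notin> S" using assms(3) unfolding unranked_def by auto
  have "blk S u v a \<le> blk S u v b"
  proof (cases "a = u \<or> a = v \<or> (u,a) \<in> S \<or> (v,a) \<in> S")
    case True
    then have "(u,b) \<in> S \<or> (v,b) \<in> S" using ab tr by blast
    moreover have "b \<noteq> u" using True ab ir un tr by blast
    moreover have "b \<noteq> v" using True ab ir un tr by blast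
    ultimately have "blk S u v b = 3" unfolding blk_def by simp
    moreover have "blk S u v a \<le> 3" unfolding blk_def by simp
    ultimately show ?thesis by simp
  next
    case False
    then have "blk S u v a = 0" unfolding blk_def by simp
    then show ?thesis by simp
  qed
  then show "p \<in> bord (blk S u v) L" using ab pab assms(4) unfolding bord_def by auto
qed

lemma bord_uv: "u \<noteq> v \<Longrightarrow> (u,v) \<in> bord (blk S u v) L"
  unfolding bord_def blk_def by auto

lemma bord_aligned:
  assumes "ranking P" "(x,y) \<in> P" "x \<noteq> y"
    and "(a,b) \<in> bord (blk S y x) L" "(a,b) \<in> P"
  shows "(a,b) \<in> bord (blk S x y) L"
proof -
  have "(a,b) \<noteq> (y,x)" using rank_asym[OF assms(1,2)] assms(5) by auto
  moreover have "(a,b) \<noteq> (x,y)" using assms(3,4) unfolding bord_def blk_def by auto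
  ultimately show ?thesis using assms(3,4) unfolding bord_def blk_def by (auto split: if_splits)
qed

lemma rank_sub_eq: "ranking F \<Longrightarrow> ranking T \<Longrightarrow> F \<subseteq> T \<Longrightarrow> F = T"
proof -
  assume f: "ranking F" and t: "ranking T" and s: "F \<subseteq> T"
  have "T \<subseteq> F"
  proof
    fix p assume p: "p \<in> T"
    obtain a b where pab: "p = (a,b)" by (cases p)
    have "a \<noteq> b" using t p pab unfolding ranking_def irrefl_def by auto
    then have "(a,b) \<in> F \<or> (b,a) \<in> F" using f unfolding ranking_def total_on_def by blast
    moreover have "(b,a) \<notin> T" using rank_asym[OF t] p pab by simp
    ultimately show "p \<in> F" using s pab by blast
  qed
  then show ?thesis using s by blast
qed

lemma decisive_winner:
  assumes "odd I" "3 \<le> I" "i < I" "a \<noteq> b" "\<forall>j<I. j \<noteq> i \<longrightarrow> votes j = a" "votes i \<in> {a,b}"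
  shows "winner I votes {a,b} = a"
proof -
  have v: "\<forall>j<I. votes j \<in> {a,b}" using assms(5,6) by auto
  have "{..<I} - {i} \<subseteq> {j. j < I \<and> votes j = a}" using assms(5) by auto
  then have "card ({..<I} - {i}) \<le> card {j. j < I \<and> votes j = a}" by (rule card_mono[rotated]) simp
  moreover have "card ({..<I} - {i}) = I - 1" using assms(3) by simp
  ultimately have "I < 2 * card {j. j < I \<and> votes j = a}" using assms(2) by linarith
  then show ?thesis using winner_char(2)[OF assms(1,4) v] by simp
qed


lemma phase3:
  fixes c :: "('a::finite) chair_strategy"
  assumes ok: "prof_ok I c vs" "odd I" "3 \<le> I" "i < I" "ranking T"
    and base: "hist_rel (play I c vs n0) \<subseteq> T"
    and hyp: "\<And>h'. non_terminal h' \<Longrightarrow> hist_rel (play I c vs n0) \<subseteq> hist_rel h' \<Longrightarrow> hist_rel h' \<subseteq> T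
       \<Longrightarrow> length (play I c vs n0) \<le> length h' \<Longrightarrow> \<forall>j<I. j \<noteq> i \<longrightarrow> vs j h' (c h') = sincere T h' (c h')"
  shows "n0 \<le> n \<Longrightarrow> hist_rel (play I c vs n) \<subseteq> T"
proof (induction n rule: dec_induct)
  case base then show ?case using assms(6) by simp
next
  case (step n)
  define h' where "h' = play I c vs n"
  show ?case
  proof (cases "total (hist_rel h')")
    case True then show ?thesis using step h'_def by (simp add: Let_def)
  next
    case False
    have nt: "non_terminal h'" using play_valid[OF ok(1,2)] False h'_def unfolding non_terminal_def by simp
    have mono: "hist_rel (play I c vs n0) \<subseteq> hist_rel h'" "length (play I c vs n0) \<le> length h'"
      using play_mono[OF step(1)] h'_def by auto
    have off: "offerable h' (c h')" using ok(1) nt unfolding prof_ok_def chair_strat_def by blast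
    then obtain a b where ab: "c h' = {a,b}" "unranked (hist_rel h') a b" unfolding offerable_def by blast
    obtain w l where wl: "{w,l} = {a,b}" "(w,l) \<in> T" "w \<noteq> l"
      using ok(5) ab(2) unfolding ranking_def total_on_def unranked_def by (metis UNIV_I insert_commute)
    have cwl: "c h' = {w,l}" using ab wl by simp
    have opp: "\<forall>j<I. j \<noteq> i \<longrightarrow> vs j h' (c h') = w"
      using hyp[OF nt mono(1) step(3)[folded h'_def] mono(2)] sincere_pick[OF ok(5) wl(2)] cwl by simp
    have vi: "vs i h' (c h') \<in> {w,l}" using ok(1,4) nt off cwl unfolding prof_ok_def voter_strat_def by metis
    have win: "winner I (\<lambda>j. vs j h' (c h')) (c h') = w"
      using decisive_winner[OF ok(2,3,4) wl(3), of "\<lambda>j. vs j h' (c h')"] opp vi cwl by simp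
    have st: "step I c vs h' = (w,l)" using step_char[of c h' w l I vs] cwl wl(3) win by simp
    have "play I c vs (Suc n) = h' @ [(w,l)]" using False st h'_def by (simp add: Let_def)
    moreover have "trancl (hist_rel h' \<union> {(w,l)}) \<subseteq> T"
    proof -
      have "hist_rel h' \<union> {(w,l)} \<subseteq> T" using step(3) h'_def wl(2) by auto
      then have "trancl (hist_rel h' \<union> {(w,l)}) \<subseteq> trancl T" by (rule trancl_mono_subset)
      also have "trancl T = T" using ok(5) unfolding ranking_def by (simp add: trancl_id)
      finally show ?thesis .
    qed
    ultimately show ?thesis by simp
  qed
qed


lemma part_ii:
  fixes pref :: "nat \<Rightarrow> ('a::finite \<times> 'a) set"
  assumes oI: "odd I" and I3: "3 \<le> I" and rp: "ranking (pref i)" and iI: "i < I"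
    and vs': "voter_strat s'" and ns: "\<not> same_strat s' (sincere (pref i))"
  shows "\<exists>c vs. opponents_ok I i c vs \<and> obviously_better I pref i c vs (sincere (pref i)) s'"
proof -
  obtain h P where hP: "non_terminal h" "offerable h P" "s' h P \<noteq> sincere (pref i) h P"
    using ns unfolding same_strat_def by blast
  define S where "S = hist_rel h"
  obtain a b where ab: "P = {a,b}" "unranked S a b" using hP(2) S_def unfolding offerable_def by blast
  obtain x y where xy: "P = {x,y}" "x \<noteq> y" "(x,y) \<in> pref i"
    using rp ab unfolding ranking_def total_on_def unranked_def by (metis insert_commute UNIV_I)
  have uxy: "unranked S x y" using ab xy unfolding unranked_def by (metis doubleton_eq_iff)
  have sinx: "sincere (pref i) h P = x" using sincere_pick[OF rp xy(3)] xy(1) by simp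
  have sy: "s' h P = y" using vs' hP sinx xy(1) unfolding voter_strat_def by auto
  have vh: "valid_hist h" using hP(1) unfolding non_terminal_def by simp
  have spo: "irrefl S" "trans S" using valid_props[OF vh] S_def by auto
  obtain L where L: "ranking L" "S \<subseteq> L" using lin_ext[OF spo] by blast
  define T1 where "T1 = bord (blk S x y) L"
  define T2 where "T2 = bord (blk S y x) L"
  have uyx: "unranked S y x" using uxy unfolding unranked_def by auto
  have rT1: "ranking T1" and rT2: "ranking T2" using bord_ranking[OF L(1)] T1_def T2_def by auto
  have ST1: "S \<subseteq> T1" using bord_sup[OF spo uxy L(2)] T1_def by simp
  have ST2: "S \<subseteq> T2" using bord_sup[OF spo uyx L(2)] T2_def by simp
  have xyT1: "(x,y) \<in> T1" using bord_uv[OF xy(2)] T1_def by simp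
  have yxT2: "(y,x) \<in> T2" using bord_uv[of y x] xy(2) T2_def by simp
  have yxT1: "(y,x) \<notin> T1" using rank_asym[OF rT1 xyT1] .
  have xyT2: "(x,y) \<notin> T2" using rank_asym[OF rT2 yxT2] .
  have yxS: "(y,x) \<notin> S" using uxy unfolding unranked_def by simp
  define m where "m = I div 2"
  have Im: "I = 2 * m + 1" using oI m_def by presburger
  define X0 where "X0 = (if m \<le> i then {..<m} else {..<Suc m} - {i})"
  have X0c: "card X0 = m" using iI unfolding X0_def by auto
  have X0i: "i \<notin> X0" unfolding X0_def by auto
  have X0I: "X0 \<subseteq> {..<I}" using Im unfolding X0_def by auto
  define G where "G h' = (if (y,x) \<in> hist_rel h' then T2 else T1)" for h' :: "'a history"
  have rG: "ranking (G h')" for h' using rT1 rT2 G_def by simp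
  define c :: "'a chair_strategy" where "c h' = (if (\<exists>k<length h. h' = take k h)
      then {fst (h ! length h'), snd (h ! length h')}
      else if h' = h then {x,y} else (SOME Q. offerable h' Q))" for h'
  define vs :: "nat \<Rightarrow> 'a voter_strategy" where "vs j h' Q = (if h' = h \<and> Q = {x,y}
      then (if j \<in> X0 then x else y) else sincere (G h') h' Q)" for j h' Q
  have cs: "chair_strat c" unfolding chair_strat_def
  proof (intro allI impI)
    fix h' :: "'a history" assume nt: "non_terminal h'"
    show "offerable h' (c h')"
    proof (cases "\<exists>k<length h. h' = take k h")
      case True
      then obtain k where k: "k < length h" "h' = take k h" by blast
      then have "length h' = k" by simp
      then show ?thesis using True k valid_prefix[OF vh k(1)] c_def unfolding offerable_def by auto
    next
      case False
      have c1: "c h' = (if h' = h then {x,y} else (SOME Q. offerable h' Q))"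
        unfolding c_def using False by (rule if_not_P)
      show ?thesis
      proof (cases "h' = h")
        case True then show ?thesis using c1 hP(2) xy(1) by simp
      next
        case F2: False
        have "\<exists>Q. offerable h' Q" using nt unfolding non_terminal_def total_on_def offerable_def unranked_def by blast
        then show ?thesis using c1 F2 by (simp add: someI_ex)
      qed
    qed
  qed
  have vsok: "voter_strat (vs j)" for j unfolding voter_strat_def
  proof (intro allI impI)
    fix h' :: "'a history" and Q assume "non_terminal h' \<and> offerable h' Q"
    then obtain p q where pq: "Q = {p,q}" "p \<noteq> q" unfolding offerable_def unranked_def by blast
    show "vs j h' Q \<in> Q"
      using sincere_in[OF rG pq(2)] pq(1) unfolding vs_def by auto
  qed
  have opok: "opponents_ok I i c vs" using cs vsok unfolding opponents_ok_def by simp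
  let ?N = "card (UNIV :: 'a set) * card (UNIV :: 'a set)"
  have lenN: "Suc (length h) \<le> ?N" using valid_len_lt[OF vh] by simp
  have out: "outcome I c (vs(i:=t)) = T"
    if vt: "voter_strat t" and tw: "t h {x,y} = w" and wl: "{w,l} = {x,y}" "w \<noteq> l"
      and rT: "ranking T" and ST: "S \<subseteq> T" and wlT: "(w,l) \<in> T"
      and GT: "\<And>h'. hist_rel (h @ [(w,l)]) \<subseteq> hist_rel h' \<Longrightarrow> hist_rel h' \<subseteq> T \<Longrightarrow> G h' = T"
    for t w l T
  proof -
    define V where "V = vs(i:=t)"
    have ok: "prof_ok I c V" using cs vsok vt unfolding prof_ok_def V_def by simp
    have ph1: "k \<le> length h \<Longrightarrow> play I c V k = take k h" for k
    proof (induction k)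
      case 0 then show ?case by simp
    next
      case (Suc k)
      then have kl: "k < length h" by simp
      have IH: "play I c V k = take k h" by (rule Suc.IH) (use kl in simp)
      define hk where "hk = take k h"
      have vp: "unranked (hist_rel hk) (fst (h!k)) (snd (h!k))" "\<not> total (hist_rel hk)" "valid_hist hk"
        using valid_prefix[OF vh kl] hk_def by auto
      have lhk: "length hk = k" using kl hk_def by simp
      have chk: "c hk = {fst (h!k), snd (h!k)}" using kl lhk hk_def c_def by auto
      have hkh: "hk \<noteq> h" using lhk kl by auto
      have "hist_rel hk \<subseteq> hist_rel h" using hist_rel_mono_append[of hk "drop k h"] hk_def by simp
      then have Ghk: "G hk = T1" using yxS S_def G_def by auto
      have "h ! k \<in> set h" using kl by simp
      then have inT1: "(fst (h!k), snd (h!k)) \<in> T1" using set_hist_rel[of h] ST1 S_def by auto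
      have neq: "fst (h!k) \<noteq> snd (h!k)" using vp(1) unfolding unranked_def by simp
      have opp: "\<forall>j<I. j \<noteq> i \<longrightarrow> V j hk (c hk) = fst (h!k)"
        using sincere_pick[OF rT1 inT1] chk hkh Ghk unfolding V_def vs_def by simp
      have ntk: "non_terminal hk" using vp unfolding non_terminal_def by simp
      have offk: "offerable hk (c hk)" using chk vp(1) unfolding offerable_def by blast
      have vi: "V i hk (c hk) \<in> {fst (h!k), snd (h!k)}" using vt ntk offk chk unfolding voter_strat_def V_def by auto
      have win: "winner I (\<lambda>j. V j hk (c hk)) (c hk) = fst (h!k)"
        using decisive_winner[OF oI I3 iI neq, of "\<lambda>j. V j hk (c hk)"] opp vi chk by simp
      have st: "step I c V hk = h ! k" using step_char[of c hk "fst (h!k)" "snd (h!k)" I V] chk neq win by simp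
      have "play I c V (Suc k) = hk @ [h ! k]" using IH vp(2) st hk_def by (simp add: Let_def)
      then show ?case using kl hk_def take_Suc_conv_app_nth by metis
    qed
    have p0: "play I c V (length h) = h" using ph1[of "length h"] by simp
    have ph2: "play I c V (Suc (length h)) = h @ [(w,l)]"
    proof -
      have nth: "\<not> total (hist_rel h)" using hP(1) unfolding non_terminal_def by simp
      have nex: "\<not> (\<exists>k<length h. h = take k h)"
      proof clarify
        fix k assume k: "k < length h" "h = take k h"
        from k(2) have "length h = length (take k h)" by (rule arg_cong)
        moreover have "length (take k h) = k" using k(1) by (simp only: length_take min_def) simp
        ultimately show False using k(1) by linarith
      qed
      have "c h = (if h = h then {x,y} else (SOME Q. offerable h Q))"
        unfolding c_def by (rule if_not_P[OF nex])
      then have ch: "c h = {x,y}" by simp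
      define v where "v = (\<lambda>j. if j = i then w else if j \<in> X0 then x else y)"
      have vv: "(\<lambda>j. V j h (c h)) = v"
      proof
        fix j show "V j h (c h) = v j" unfolding V_def v_def using ch tw by (simp add: vs_def)
      qed
      have vin: "\<forall>j<I. v j \<in> {x,y}" using wl unfolding v_def by auto
      have win: "winner I v {x,y} = w"
      proof (cases "w = x")
        case True
        have "{j. j < I \<and> v j = x} = insert i X0"
        proof (rule set_eqI)
          fix j show "j \<in> {j. j < I \<and> v j = x} \<longleftrightarrow> j \<in> insert i X0"
            using True X0I iI xy(2) unfolding v_def by auto
        qed
        moreover have "card (insert i X0) = Suc m" using X0c X0i X0I finite_subset[OF X0I] by simp
        ultimately have "I < 2 * card {j. j < I \<and> v j = x}" using Im by simp
        then show ?thesis using winner_char(2)[OF oI xy(2) vin] True by simp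
      next
        case False
        then have wy: "w = y" using wl by auto
        have "{j. j < I \<and> v j = x} = X0"
        proof (rule set_eqI)
          fix j show "j \<in> {j. j < I \<and> v j = x} \<longleftrightarrow> j \<in> X0"
            using wy X0I X0i xy(2) unfolding v_def by auto
        qed
        then have "\<not> I < 2 * card {j. j < I \<and> v j = x}" using Im X0c by simp
        then have "winner I v {x,y} \<noteq> x" using winner_char(2)[OF oI xy(2) vin] by simp
        then show ?thesis using winner_char(1)[OF oI xy(2) vin] wy by simp
      qed
      have "step I c V h = (w,l)" using step_char[of c h w l I V] ch wl win vv by simp
      then show ?thesis using p0 nth by (simp add: Let_def)
    qed
    have base: "hist_rel (h @ [(w,l)]) \<subseteq> T"
    proof -
      have "hist_rel h \<union> {(w,l)} \<subseteq> T" using ST wlT S_def by auto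
      then have "trancl (hist_rel h \<union> {(w,l)}) \<subseteq> trancl T" by (rule trancl_mono_subset)
      also have "trancl T = T" using rT unfolding ranking_def by (simp add: trancl_id)
      finally show ?thesis by simp
    qed
    have hyp: "\<forall>j<I. j \<noteq> i \<longrightarrow> V j h' (c h') = sincere T h' (c h')"
      if "non_terminal h'" "hist_rel (play I c V (Suc (length h))) \<subseteq> hist_rel h'" "hist_rel h' \<subseteq> T"
         "length (play I c V (Suc (length h))) \<le> length h'" for h'
    proof -
      have "h' \<noteq> h" using that(4) ph2 by auto
      moreover have "G h' = T" using GT that(2,3) ph2 by simp
      ultimately show ?thesis unfolding V_def vs_def by simp
    qed
    have "hist_rel (play I c V ?N) \<subseteq> T"
      using phase3[OF ok oI I3 iI rT _ hyp lenN] base ph2 by simp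
    then show ?thesis using rank_sub_eq[OF outcome_ranking[OF ok oI] rT] unfolding outcome_def V_def by simp
  qed
  have o1: "outcome I c (vs(i := sincere (pref i))) = T1"
  proof (rule out[of _ x y])
    show "voter_strat (sincere (pref i))" by (rule sincere_vs[OF rp])
    show "sincere (pref i) h {x,y} = x" using sinx xy(1) by simp
    show "\<And>h'. hist_rel (h @ [(x,y)]) \<subseteq> hist_rel h' \<Longrightarrow> hist_rel h' \<subseteq> T1 \<Longrightarrow> G h' = T1"
      using yxT1 G_def by auto
  qed (use xy rT1 ST1 xyT1 in auto)
  have o2: "outcome I c (vs(i := s')) = T2"
  proof (rule out[of _ y x])
    show "s' h {x,y} = y" using sy xy(1) by simp
    show "\<And>h'. hist_rel (h @ [(y,x)]) \<subseteq> hist_rel h' \<Longrightarrow> hist_rel h' \<subseteq> T2 \<Longrightarrow> G h' = T2"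
    proof -
      fix h' assume "hist_rel (h @ [(y,x)]) \<subseteq> hist_rel h'"
      moreover have "(y,x) \<in> hist_rel (h @ [(y,x)])" by (auto intro: r_into_trancl')
      ultimately show "G h' = T2" using G_def by auto
    qed
  qed (use xy rT2 ST2 yxT2 vs' in auto)
  have "obviously_better I pref i c vs (sincere (pref i)) s'"
    unfolding obviously_better_def Let_def o1 o2 more_aligned_def
  proof (intro conjI allI impI)
    show "T1 \<noteq> T2" using xyT1 xyT2 by auto
    fix u v assume "(u,v) \<in> pref i" "(u,v) \<in> T2"
    then show "(u,v) \<in> T1" using bord_aligned[OF rp xy(3) xy(2)] T1_def T2_def by simp
  qed
  then show ?thesis using opok by blast
qed


theorem proposition4:
  fixes I :: nat and pref :: "nat \<Rightarrow> ('a::finite \<times> 'a) set" and i :: nat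
  assumes "odd I" and "3 \<le> I"
    and "\<forall>j<I. ranking (pref j)"
    and "i < I"
  shows "dominant I pref i (sincere (pref i)) \<and>
         (\<forall>s. dominant I pref i s \<longrightarrow> same_strat s (sincere (pref i)))"
proof -
  have rp: "ranking (pref i)" using assms(3,4) by simp
  have vsi: "voter_strat (sincere (pref i))" by (rule sincere_vs[OF rp])
  have dom: "dominant I pref i (sincere (pref i))"
    unfolding dominant_def
  proof (intro conjI allI impI vsi)
    fix s' assume s': "voter_strat s' \<and> \<not> same_strat s' (sincere (pref i))"
    show "\<not> (\<exists>c vs. opponents_ok I i c vs \<and> obviously_better I pref i c vs s' (sincere (pref i)))"
      using part_i[where pref=pref and i=i and I=I, OF assms(1) rp assms(4)] s' by blast
    show "\<exists>c vs. opponents_ok I i c vs \<and> obviously_better I pref i c vs (sincere (pref i)) s'"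
      using part_ii[where pref=pref and i=i and I=I, OF assms(1,2) rp assms(4)] s' by blast
  qed
  have uniq: "same_strat s (sincere (pref i))" if ds: "dominant I pref i s" for s
  proof (rule ccontr)
    assume ns: "\<not> same_strat s (sincere (pref i))"
    have vs: "voter_strat s" using ds unfolding dominant_def by simp
    have ns2: "\<not> same_strat (sincere (pref i)) s" using ns unfolding same_strat_def by metis
    have "\<not> (\<exists>c vs. opponents_ok I i c vs \<and> obviously_better I pref i c vs (sincere (pref i)) s)"
      using ds vsi ns2 unfolding dominant_def by blast
    moreover have "\<exists>c vs. opponents_ok I i c vs \<and> obviously_better I pref i c vs (sincere (pref i)) s"
      using part_ii[where pref=pref and i=i and I=I, OF assms(1,2) rp assms(4) vs ns] .
    ultimately show False by blast
  qed
  show ?thesis using dom uniq by blast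
qed

end
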